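(* Let $(X,d)$ be a nonempty metric space, let $p:[0,1]\to X$ be a rectifiable path with range $Y=p([0,1])$, and let $F:X\rightarrow K(X)$ and $\beta\in[0,1]$ be such that $s_Y(F(x))<\beta$ for all $x\in Y$. Then $l(F\circ p)\le\beta\, l(p)<\infty$, where $l(F\circ p):=\sup_{\pi\in\Pi}\sum_{i=1}^n H(F(p(t_{i-1})),F(p(t_i)))$.
   Context: $\Pi$ is the set of finite partitions $0=t_0<\cdots<t_n=1$ of $[0,1]$; $l(p)=\sup_{\pi\in\Pi}\sum_i d(p(t_{i-1}),p(t_i))$, and $p$ is rectifiable if $p$ is continuous and $l(p)<\infty$. $K(X)$ is the set of nonempty compact subsets of $X$; $H$ is the Hausdorff distance. For $x\in Y$, $s_Y(F(x)):=\limsup_{y\to x,\ y\in Y\setminus\{x\}}\frac{H(F(x),F(y))}{d(x,y)}$ if $x$ is a limit point of $Y$, and $s_Y(F(x))=0$ otherwise. *)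

theory Defs
  imports "HOL-Analysis.Analysis"
begin

definition hausdorff_dist :: "'a::metric_space set \<Rightarrow> 'a set \<Rightarrow> real" where
  "hausdorff_dist A B = max (SUP a\<in>A. infdist a B) (SUP b\<in>B. infdist b A)"

definition partitions01 :: "(nat \<times> (nat \<Rightarrow> real)) set" where
  "partitions01 = {(n, t). n \<ge> 1 \<and> t 0 = 0 \<and> t n = 1 \<and> (\<forall>i<n. t i < t (Suc i))}"

definition variation_wrt :: "('b \<Rightarrow> 'b \<Rightarrow> real) \<Rightarrow> (real \<Rightarrow> 'b) \<Rightarrow> ereal" where
  "variation_wrt d f = (SUP nt\<in>partitions01.
      ereal (\<Sum>i\<in>{1..fst nt}. d (f (snd nt (i - 1))) (f (snd nt i))))"

definition path_len :: "(real \<Rightarrow> 'a::metric_space) \<Rightarrow> ereal" where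
  "path_len p = variation_wrt dist p"

definition rectifiable :: "(real \<Rightarrow> 'a::metric_space) \<Rightarrow> bool" where
  "rectifiable p \<longleftrightarrow> continuous_on {0..1} p \<and> path_len p < \<infinity>"

definition slope_Y :: "'a::metric_space set \<Rightarrow> ('a \<Rightarrow> 'a set) \<Rightarrow> 'a \<Rightarrow> ereal" where
  "slope_Y Y F x = (if x islimpt Y
     then Limsup (at x within (Y - {x})) (\<lambda>y. ereal (hausdorff_dist (F x) (F y) / dist x y))
     else 0)"

end

theory Submission
  imports Defs
begin

lemma hd_bdd:
  fixes A B :: "'a::metric_space set"
  assumes "compact A"
  shows "bdd_above ((\<lambda>a. infdist a B) ` A)"
proof -
  have "compact ((\<lambda>a. infdist a B) ` A)"
    by (intro compact_continuous_image continuous_intros assms)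
  then show ?thesis by (simp add: bounded_imp_bdd_above compact_imp_bounded)
qed

lemma hd_upper1:
  assumes "compact A" "a \<in> A"
  shows "infdist a B \<le> hausdorff_dist A B"
proof -
  have "infdist a B \<le> (SUP a\<in>A. infdist a B)"
    using hd_bdd[OF assms(1)] assms(2) by (intro cSUP_upper)
  then show ?thesis unfolding hausdorff_dist_def by linarith
qed

lemma hd_sym: "hausdorff_dist A B = hausdorff_dist B A"
  unfolding hausdorff_dist_def by (simp add: max.commute)

lemma hd_upper2:
  assumes "compact B" "b \<in> B"
  shows "infdist b A \<le> hausdorff_dist A B"
  using hd_upper1[OF assms, of A] hd_sym by metis

lemma hd_refl:
  assumes "A \<noteq> {}"
  shows "hausdorff_dist A A = 0"
proof -
  have "(SUP a\<in>A. infdist a A) = 0"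
    using assms by (simp add: cong: SUP_cong)
  then show ?thesis unfolding hausdorff_dist_def by simp
qed

lemma hd_tri_pt:
  assumes "compact B" "B \<noteq> {}" "compact C" "C \<noteq> {}"
  shows "infdist a C \<le> infdist a B + hausdorff_dist B C"
proof -
  have "infdist a C - hausdorff_dist B C \<le> dist a b" if "b \<in> B" for b
  proof -
    have "infdist a C \<le> infdist b C + dist a b" by (rule infdist_triangle)
    moreover have "infdist b C \<le> hausdorff_dist B C" using hd_upper1[OF assms(1) that] .
    ultimately show ?thesis by linarith
  qed
  then have "infdist a C - hausdorff_dist B C \<le> (INF b\<in>B. dist a b)"
    using assms(2) by (intro cINF_greatest) auto
  then show ?thesis using assms(2) unfolding infdist_def by simp
qed

lemma hd_tri:
  assumes "compact A" "A \<noteq> {}" "compact B" "B \<noteq> {}" "compact C" "C \<noteq> {}"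
  shows "hausdorff_dist A C \<le> hausdorff_dist A B + hausdorff_dist B C"
proof -
  have 1: "(SUP a\<in>A. infdist a C) \<le> hausdorff_dist A B + hausdorff_dist B C"
  proof (rule cSUP_least)
    fix a assume "a \<in> A"
    have "infdist a C \<le> infdist a B + hausdorff_dist B C" using hd_tri_pt assms by blast
    moreover have "infdist a B \<le> hausdorff_dist A B" using hd_upper1 assms \<open>a \<in> A\<close> by blast
    ultimately show "infdist a C \<le> hausdorff_dist A B + hausdorff_dist B C" by linarith
  qed (use assms in auto)
  have 2: "(SUP c\<in>C. infdist c A) \<le> hausdorff_dist A B + hausdorff_dist B C"
  proof (rule cSUP_least)
    fix c assume "c \<in> C"
    have "infdist c A \<le> infdist c B + hausdorff_dist B A" using hd_tri_pt assms by blast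
    moreover have "infdist c B \<le> hausdorff_dist C B" using hd_upper1 assms \<open>c \<in> C\<close> by blast
    ultimately show "infdist c A \<le> hausdorff_dist A B + hausdorff_dist B C"
      using hd_sym[of A B] hd_sym[of B C] by linarith
  qed (use assms in auto)
  show ?thesis using 1 2 unfolding hausdorff_dist_def by simp
qed


definition chains :: "real \<Rightarrow> (nat \<times> (nat \<Rightarrow> real)) set" where
  "chains x = {(n, t). t 0 = 0 \<and> t n = x \<and> (\<forall>i<n. t i < t (Suc i))}"

definition csum :: "(real \<Rightarrow> 'a::metric_space) \<Rightarrow> nat \<times> (nat \<Rightarrow> real) \<Rightarrow> real" where
  "csum p c = (\<Sum>i<fst c. dist (p (snd c i)) (p (snd c (Suc i))))"

lemma chain_mono:
  assumes "\<forall>i<n. t i < (t (Suc i)::real)" "i \<le> j" "j \<le> n"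
  shows "t i \<le> t j"
  using assms(2,3)
proof (induction j)
  case 0 then show ?case by simp
next
  case (Suc j)
  show ?case
  proof (cases "i = Suc j")
    case False
    then have "t i \<le> t j" using Suc by simp
    also have "\<dots> < t (Suc j)" using assms(1) Suc.prems by simp
    finally show ?thesis by simp
  qed simp
qed

lemma chain_ext:
  assumes "(n, t) \<in> chains a" "a < b"
  shows "(Suc n, t(Suc n := b)) \<in> chains b"
    "csum p (Suc n, t(Suc n := b)) = csum p (n, t) + dist (p a) (p b)"
proof -
  show "(Suc n, t(Suc n := b)) \<in> chains b"
    using assms unfolding chains_def by (auto simp: less_Suc_eq)
  have "csum p (Suc n, t(Suc n := b)) = (\<Sum>i<n. dist (p (t i)) (p (t (Suc i)))) + dist (p (t n)) (p b)"
    unfolding csum_def by (auto simp: sum.lessThan_Suc intro!: sum.cong)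
  then show "csum p (Suc n, t(Suc n := b)) = csum p (n, t) + dist (p a) (p b)"
    using assms unfolding chains_def csum_def by simp
qed

lemma partition_sum_reindex:
  "(\<Sum>i\<in>{1..n}. f (i - 1) i) = (\<Sum>i<n. f i (Suc i))"
proof -
  have "(\<Sum>i\<in>{1..n}. f (i - 1) i) = (\<Sum>i\<in>Suc ` {..<n}. f (i - 1) i)"
    by (simp add: image_Suc_lessThan)
  also have "\<dots> = (\<Sum>i<n. f i (Suc i))" by (subst sum.reindex) auto
  finally show ?thesis .
qed

lemma path_len_fin:
  fixes p :: "real \<Rightarrow> 'a::metric_space"
  assumes "path_len p < \<infinity>"
  shows "path_len p = ereal (real_of_ereal (path_len p))"
    "\<And>n t. (n,t) \<in> partitions01 \<Longrightarrow> (\<Sum>i\<in>{1..n}. dist (p (t (i - 1))) (p (t i))) \<le> real_of_ereal (path_len p)"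
proof -
  have le: "ereal (\<Sum>i\<in>{1..n}. dist (p (t (i - 1))) (p (t i))) \<le> path_len p" if "(n,t) \<in> partitions01" for n t
    unfolding path_len_def variation_wrt_def
    by (rule SUP_upper2[OF that]) simp
  have "(1, \<lambda>i. if i = 0 then 0 else 1) \<in> partitions01" unfolding partitions01_def by auto
  from le[OF this] have "path_len p \<noteq> -\<infinity>" by auto
  with assms show fin: "path_len p = ereal (real_of_ereal (path_len p))"
    by (cases "path_len p") auto
  fix n t assume "(n,t) \<in> partitions01"
  from le[OF this] fin show "(\<Sum>i\<in>{1..n}. dist (p (t (i - 1))) (p (t i))) \<le> real_of_ereal (path_len p)"
    by (metis ereal_less_eq(3))
qed


theorem lemma16:
  fixes p :: "real \<Rightarrow> 'a::metric_space" and F :: "'a \<Rightarrow> 'a set" and \<beta> :: real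
  assumes "rectifiable p"
    and "\<And>x. F x \<noteq> {} \<and> compact (F x)"
    and "0 \<le> \<beta>" and "\<beta> \<le> 1"
    and "\<And>x. x \<in> p ` {0..1} \<Longrightarrow> slope_Y (p ` {0..1}) F x < ereal \<beta>"
  shows "variation_wrt hausdorff_dist (F \<circ> p) \<le> ereal \<beta> * path_len p
         \<and> ereal \<beta> * path_len p < \<infinity>"
proof -
  define Y where "Y = p ` {0..1}"
  define Lr where "Lr = real_of_ereal (path_len p)"
  define V where "V x = Sup (csum p ` chains x)" for x
  have cont: "continuous_on {0..1} p" and fin0: "path_len p < \<infinity>"
    using assms(1) unfolding rectifiable_def by auto
  have plen: "path_len p = ereal Lr" using path_len_fin(1)[OF fin0] Lr_def by simp
  have plen2: "(\<Sum>i\<in>{1..n}. dist (p (t (i - 1))) (p (t i))) \<le> Lr" if "(n,t) \<in> partitions01" for n t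
    using path_len_fin(2)[OF fin0 that] Lr_def by simp
  have Fne: "F x \<noteq> {}" and Fc: "compact (F x)" for x using assms(2) by auto
  have tri: "hausdorff_dist (F x) (F z) \<le> hausdorff_dist (F x) (F y) + hausdorff_dist (F y) (F z)" for x y z
    by (rule hd_tri) (simp_all add: Fne Fc)
  have c_le_L: "csum p c \<le> Lr" if "c \<in> chains x" "0 \<le> x" "x \<le> 1" for c x
  proof -
    obtain n t where c: "c = (n,t)" by fastforce
    have to1: "csum p (n,t) \<le> Lr" if "(n,t) \<in> chains 1" for n t
    proof -
      have "n \<ge> 1" using that unfolding chains_def by (cases n) auto
      then have "(n,t) \<in> partitions01" using that unfolding chains_def partitions01_def by auto
      from plen2[OF this] show ?thesis unfolding csum_def
        using partition_sum_reindex[of "\<lambda>i j. dist (p (t i)) (p (t j))" n] by simp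
    qed
    show ?thesis
    proof (cases "x = 1")
      case True then show ?thesis using to1 that c by simp
    next
      case False
      then have "x < 1" using that by simp
      from chain_ext(1)[OF that(1)[unfolded c] this] chain_ext(2)[OF that(1)[unfolded c] this, of p] to1 show ?thesis
        using c by (metis add_increasing2 zero_le_dist le_add_same_cancel1 order_trans)
    qed
  qed
  have ch_ne: "chains x \<noteq> {}" if "0 \<le> x" for x
  proof (cases "x = 0")
    case True
    then have "(0, \<lambda>_. 0) \<in> chains x" unfolding chains_def by simp
    then show ?thesis by blast
  next
    case False
    then have "(1, \<lambda>i. if i = 0 then 0 else x) \<in> chains x" using that unfolding chains_def by simp
    then show ?thesis by blast
  qed
  have bdd: "bdd_above (csum p ` chains x)" if "0 \<le> x" "x \<le> 1" for x
    using c_le_L that by (intro bdd_aboveI[of _ Lr]) auto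
  have V_up: "csum p c \<le> V x" if "c \<in> chains x" "0 \<le> x" "x \<le> 1" for c x
    unfolding V_def using bdd[OF that(2,3)] that(1) by (intro cSup_upper) auto
  have V_le: "V x \<le> Lr" if "0 \<le> x" "x \<le> 1" for x
    unfolding V_def using ch_ne c_le_L that by (intro cSup_least) auto
  have V0: "0 \<le> V 0"
  proof -
    have "(0, \<lambda>_. 0) \<in> chains 0" unfolding chains_def by simp
    from V_up[OF this] show ?thesis by (simp add: csum_def)
  qed
  have Vadd: "V x + dist (p x) (p y) \<le> V y" if "0 \<le> x" "x \<le> y" "y \<le> 1" for x y
  proof (cases "x = y")
    case True then show ?thesis by simp
  next
    case False
    then have xy: "x < y" using that by simp
    have "V x \<le> V y - dist (p x) (p y)"
      unfolding V_def[of x]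
    proof (rule cSup_least)
      show "csum p ` chains x \<noteq> {}" using ch_ne that by blast
      fix s assume "s \<in> csum p ` chains x"
      then obtain n t where nt: "(n,t) \<in> chains x" "s = csum p (n,t)" by auto
      from chain_ext(1)[OF nt(1) xy] chain_ext(2)[OF nt(1) xy, of p] V_up[of _ y] that
      show "s \<le> V y - dist (p x) (p y)" using nt(2) by fastforce
    qed
    then show ?thesis by simp
  qed
  have local: "\<exists>\<delta>>0. \<forall>s\<in>{0..1}. dist s t < \<delta> \<longrightarrow>
      hausdorff_dist (F (p t)) (F (p s)) \<le> \<beta> * dist (p t) (p s)" if t01: "t \<in> {0..1}" for t
  proof -
    define x where "x = p t"
    have xY: "x \<in> Y" using t01 unfolding x_def Y_def by simp
    obtain e where e: "e > 0" "\<forall>y\<in>Y. y \<noteq> x \<and> dist y x < e \<longrightarrow>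
        hausdorff_dist (F x) (F y) \<le> \<beta> * dist x y"
    proof (cases "x islimpt Y")
      case True
      then have "Limsup (at x within (Y - {x})) (\<lambda>y. ereal (hausdorff_dist (F x) (F y) / dist x y)) < ereal \<beta>"
        using assms(5)[of x] xY unfolding slope_Y_def Y_def by simp
      from Limsup_lessD[OF this] obtain d where d: "d > 0" "\<forall>y\<in>Y - {x}. y \<noteq> x \<and> dist y x < d \<longrightarrow>
          ereal (hausdorff_dist (F x) (F y) / dist x y) < ereal \<beta>"
        unfolding eventually_at by blast
      show ?thesis
      proof (rule that[OF d(1)], intro ballI impI)
        fix y assume "y \<in> Y" "y \<noteq> x \<and> dist y x < d"
        with d(2) have "hausdorff_dist (F x) (F y) / dist x y < \<beta>" by auto
        moreover have "dist x y > 0" using \<open>y \<noteq> x \<and> dist y x < d\<close> by auto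
        ultimately show "hausdorff_dist (F x) (F y) \<le> \<beta> * dist x y"
          by (simp add: divide_less_eq)
      qed
    next
      case False
      then obtain e where "e > 0" "\<forall>y\<in>Y. \<not> (y \<noteq> x \<and> dist y x < e)"
        unfolding islimpt_approachable by auto
      then show ?thesis using that by blast
    qed
    from cont t01 e(1) obtain \<delta> where \<delta>: "\<delta> > 0" "\<forall>s\<in>{0..1}. dist s t < \<delta> \<longrightarrow> dist (p s) (p t) < e"
      unfolding continuous_on_iff by meson
    show ?thesis
    proof (intro exI[of _ \<delta>] conjI ballI impI \<delta>(1))
      fix s assume s: "s \<in> {0..1}" "dist s t < \<delta>"
      show "hausdorff_dist (F (p t)) (F (p s)) \<le> \<beta> * dist (p t) (p s)"
      proof (cases "p s = p t")
        case True then show ?thesis by (simp add: hd_refl[OF Fne])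
      next
        case False
        have "p s \<in> Y" using s Y_def by simp
        then show ?thesis using e(2) \<delta>(2) s False unfolding x_def by auto
      qed
    qed
  qed
  have main: "hausdorff_dist (F (p a)) (F (p b)) \<le> \<beta> * V b - \<beta> * V a"
    if ab: "0 \<le> a" "a \<le> b" "b \<le> 1" for a b
  proof -
    define P where "P y \<longleftrightarrow> hausdorff_dist (F (p a)) (F (p y)) \<le> \<beta> * V y - \<beta> * V a" for y
    define S where "S = {y\<in>{a..b}. P y}"
    have step: "P y" if "a \<le> x" "x \<le> y" "y \<le> b" "P x"
      "hausdorff_dist (F (p x)) (F (p y)) \<le> \<beta> * dist (p x) (p y)" for x y
    proof -
      have "\<beta> * (V x + dist (p x) (p y)) \<le> \<beta> * V y"
        using Vadd[of x y] that ab assms(3) by (intro mult_left_mono) auto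
      then show ?thesis using that(4,5) tri[of "p a" "p y" "p x"] unfolding P_def
        by (simp add: algebra_simps)
    qed
    have aS: "a \<in> S" unfolding S_def P_def using ab by (simp add: hd_refl[OF Fne])
    have bddS: "bdd_above S" unfolding S_def by (intro bdd_aboveI[of _ b]) auto
    define c where "c = Sup S"
    have ac: "a \<le> c" unfolding c_def using aS bddS by (intro cSup_upper)
    have cb: "c \<le> b" unfolding c_def using aS by (intro cSup_least) (auto simp: S_def)
    obtain \<delta> where \<delta>: "\<delta> > 0" "\<forall>s\<in>{0..1}. dist s c < \<delta> \<longrightarrow>
      hausdorff_dist (F (p c)) (F (p s)) \<le> \<beta> * dist (p c) (p s)"
      using local[of c] ac cb ab by auto
    have Pc: "P c"
    proof (cases "c \<in> S")
      case True then show ?thesis unfolding S_def by simp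
    next
      case False
      have "c - \<delta> < Sup S" using \<delta>(1) c_def by simp
      then obtain x where x: "x \<in> S" "c - \<delta> < x" using aS less_cSupE[of "c - \<delta>" S] by blast
      have xc: "x \<le> c" unfolding c_def using x(1) bddS by (intro cSup_upper)
      have "x \<noteq> c" using x False by auto
      have "hausdorff_dist (F (p c)) (F (p x)) \<le> \<beta> * dist (p c) (p x)"
        using \<delta>(2) x xc ab ac cb unfolding S_def by (auto simp: dist_real_def)
      then have "hausdorff_dist (F (p x)) (F (p c)) \<le> \<beta> * dist (p x) (p c)"
        by (simp add: hd_sym dist_commute)
      then show ?thesis using step[of x c] x xc cb unfolding S_def by auto
    qed
    have "c = b"
    proof (rule ccontr)
      assume "c \<noteq> b"
      then have "c < b" using cb by simp
      define y where "y = min b (c + \<delta>/2)"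
      have cy: "c < y" "y \<le> b" "dist y c < \<delta>" using \<open>c < b\<close> \<delta>(1)
        unfolding y_def by (auto simp: dist_real_def)
      have "hausdorff_dist (F (p c)) (F (p y)) \<le> \<beta> * dist (p c) (p y)"
        using \<delta>(2) cy ab ac by auto
      then have "P y" using step[of c y] Pc cy ac by auto
      then have "y \<in> S" unfolding S_def using ac cy by auto
      then have "y \<le> c" unfolding c_def using bddS by (intro cSup_upper)
      then show False using cy by simp
    qed
    then show ?thesis using Pc unfolding P_def by simp
  qed
  have var: "variation_wrt hausdorff_dist (F \<circ> p) \<le> ereal (\<beta> * Lr)"
    unfolding variation_wrt_def
  proof (rule SUP_least)
    fix nt assume "nt \<in> partitions01"
    then obtain n t where nt: "nt = (n,t)" "(n,t) \<in> partitions01" by (cases nt) auto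
    have t0: "t 0 = 0" and tn: "t n = 1" and inc: "\<forall>i<n. t i < t (Suc i)"
      using nt(2) unfolding partitions01_def by auto
    have t01: "0 \<le> t i \<and> t i \<le> 1" if "i \<le> n" for i
      using chain_mono[OF inc, of 0 i] chain_mono[OF inc, of i n] that t0 tn by simp
    have "(\<Sum>i\<in>{1..n}. hausdorff_dist ((F \<circ> p) (t (i - 1))) ((F \<circ> p) (t i)))
        = (\<Sum>i<n. hausdorff_dist (F (p (t i))) (F (p (t (Suc i)))))"
      using partition_sum_reindex[of "\<lambda>i j. hausdorff_dist (F (p (t i))) (F (p (t j)))" n] by simp
    also have "\<dots> \<le> (\<Sum>i<n. \<beta> * V (t (Suc i)) - \<beta> * V (t i))"
    proof (rule sum_mono)
      fix i assume "i \<in> {..<n}"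
      then show "hausdorff_dist (F (p (t i))) (F (p (t (Suc i)))) \<le> \<beta> * V (t (Suc i)) - \<beta> * V (t i)"
        using main[of "t i" "t (Suc i)"] t01[of i] t01[of "Suc i"] inc by auto
    qed
    also have "\<dots> = \<beta> * V (t n) - \<beta> * V (t 0)"
      by (rule sum_lessThan_telescope)
    also have "\<dots> \<le> \<beta> * Lr"
    proof -
      have "\<beta> * V 1 \<le> \<beta> * Lr" using V_le[of 1] assms(3) by (intro mult_left_mono) auto
      moreover have "0 \<le> \<beta> * V 0" using V0 assms(3) by simp
      ultimately show ?thesis using t0 tn by simp
    qed
    finally show "ereal (\<Sum>i\<in>{1..fst nt}. hausdorff_dist ((F \<circ> p) (snd nt (i - 1))) ((F \<circ> p) (snd nt i)))
        \<le> ereal (\<beta> * Lr)" using nt by simp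
  qed
  show ?thesis using var plen by simp
qed

end
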